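(* Let $G$ be a finite group. If $G$ has a subgroup isomorphic to the dihedral group $D_6$ of order $6$ or to the quaternion group $Q_8$ of order $8$, then $G$ is not strongly sequenceable.
   Context: Let $G$ have identity $e$ and let $S\subseteq G\setminus\{e\}$, $|S|=k$. For an ordering $(g_1,\dots,g_k)$ of the elements of $S$ let $h_0=e$, $h_i=g_1\cdots g_i$. The ordering is an $S$-sequencing if $h_0,\dots,h_k$ are pairwise distinct, and a rotational $S$-sequencing if $h_1,\dots,h_k$ are pairwise distinct and $h_k=e$. The group $G$ is strongly sequenceable if for every $S\subseteq G\setminus\{e\}$ there is an $S$-sequencing or a rotational $S$-sequencing (or both). *)

theory Defs
  imports "HOL-Algebra.Algebra"
begin

definition partial_prod :: "('a, 'b) monoid_scheme \<Rightarrow> 'a list \<Rightarrow> nat \<Rightarrow> 'a" where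
  "partial_prod G gs i = foldl (\<otimes>\<^bsub>G\<^esub>) \<one>\<^bsub>G\<^esub> (take i gs)"

definition S_sequencing :: "('a, 'b) monoid_scheme \<Rightarrow> 'a set \<Rightarrow> 'a list \<Rightarrow> bool" where
  "S_sequencing G S gs \<longleftrightarrow> distinct gs \<and> set gs = S \<and>
     inj_on (partial_prod G gs) {0..length gs}"

definition rotational_S_sequencing :: "('a, 'b) monoid_scheme \<Rightarrow> 'a set \<Rightarrow> 'a list \<Rightarrow> bool" where
  "rotational_S_sequencing G S gs \<longleftrightarrow> distinct gs \<and> set gs = S \<and>
     inj_on (partial_prod G gs) {1..length gs} \<and> partial_prod G gs (length gs) = \<one>\<^bsub>G\<^esub>"

definition strongly_sequenceable :: "('a, 'b) monoid_scheme \<Rightarrow> bool" where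
  "strongly_sequenceable G \<longleftrightarrow>
     (\<forall>S. S \<subseteq> carrier G - {\<one>\<^bsub>G\<^esub>} \<longrightarrow>
        (\<exists>gs. S_sequencing G S gs \<or> rotational_S_sequencing G S gs))"

text \<open>Dihedral group of order 6: elements r^i s^j encoded as (i,j), i in Z_3, j in Z_2,
  with s r = r^{-1} s.\<close>
definition D6 :: "(int \<times> int) monoid" where
  "D6 = \<lparr> carrier = {0..2} \<times> {0..1},
          monoid.mult = (\<lambda>(i,j) (k,l). ((i + (-1)^nat j * k) mod 3, (j + l) mod 2)),
          one = (0, 0) \<rparr>"

text \<open>Quaternion group of order 8: elements i^a j^b encoded as (a,b), a in Z_4, b in Z_2,
  with i^4 = 1, j^2 = i^2, j i = i^{-1} j.\<close>
definition Q8 :: "(int \<times> int) monoid" where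
  "Q8 = \<lparr> carrier = {0..3} \<times> {0..1},
          monoid.mult = (\<lambda>(a,b) (c,d). ((a + (-1)^nat b * c + 2 * b * d) mod 4, (b + d) mod 2)),
          one = (0, 0) \<rparr>"

end

theory Submission
  imports Defs
begin

fun prods :: "('a \<Rightarrow> 'a \<Rightarrow> 'a) \<Rightarrow> 'a \<Rightarrow> 'a list \<Rightarrow> 'a list" where
  "prods m c [] = []"
| "prods m c (x # xs) = m c x # prods m (m c x) xs"

function srch :: "('a \<Rightarrow> 'a \<Rightarrow> 'a) \<Rightarrow> 'a \<Rightarrow> 'a list \<Rightarrow> 'a \<Rightarrow> 'a list \<Rightarrow> bool" where
  "srch m e [] c seen = (c = e \<or> e \<notin> set seen)"
| "srch m e (y # ys) c seen = (\<exists>x\<in>set (y # ys). m c x \<notin> set seen \<and>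
      srch m e (remove1 x (y # ys)) (m c x) (m c x # seen))"
  by pat_completeness auto
termination
  apply (relation "measure (\<lambda>(m,e,rem,c,seen). length rem)")
    apply simp
   apply simp
  by (auto simp: length_remove1 dest: length_pos_if_in_set)

declare srch.simps[simp del]

lemma srch_intro:
  assumes "x \<in> set rem" "m c x \<notin> set seen" "srch m e (remove1 x rem) (m c x) (m c x # seen)"
  shows "srch m e rem c seen"
proof (cases rem)
  case Nil
  then show ?thesis using assms(1) by simp
next
  case (Cons y ys)
  show ?thesis unfolding Cons srch.simps(2) using assms unfolding Cons by blast
qed

lemma srch_nil: "c = e \<or> e \<notin> set seen \<Longrightarrow> srch m e [] c seen"
  by (simp add: srch.simps(1))

lemma srch_complete:
  "distinct gs \<Longrightarrow> distinct rem \<Longrightarrow> set gs = set rem \<Longrightarrow> distinct (prods m c gs) \<Longrightarrow>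
   set (prods m c gs) \<inter> set seen = {} \<Longrightarrow>
   (foldl m c gs = e \<or> (e \<notin> set seen \<and> e \<notin> set (prods m c gs))) \<Longrightarrow> srch m e rem c seen"
proof (induction gs arbitrary: rem c seen)
  case Nil
  then have "rem = []" by simp
  then show ?case using Nil by (simp add: srch_nil)
next
  case (Cons x xs)
  have xin: "x \<in> set rem" using Cons.prems(3) by auto
  have p: "distinct (x#xs)" "distinct rem" "set (x#xs) = set rem"
    "distinct (m c x # prods m (m c x) xs)"
    "set (m c x # prods m (m c x) xs) \<inter> set seen = {}"
    "foldl m (m c x) xs = e \<or> (e \<notin> set seen \<and> e \<notin> set (m c x # prods m (m c x) xs))"
    using Cons.prems by simp_all
  have s1: "set xs = set (remove1 x rem)"
    using p(1-3) by (simp add: set_remove1_eq) blast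
  have "srch m e (remove1 x rem) (m c x) (m c x # seen)"
  proof (rule Cons.IH)
    show "distinct xs" using p(1) by simp
    show "distinct (remove1 x rem)" using p(2) by simp
    show "set xs = set (remove1 x rem)" by (rule s1)
    show "distinct (prods m (m c x) xs)" using p(4) by simp
    show "set (prods m (m c x) xs) \<inter> set (m c x # seen) = {}" using p(4,5) by auto
    show "foldl m (m c x) xs = e \<or> (e \<notin> set (m c x # seen) \<and> e \<notin> set (prods m (m c x) xs))"
      using p(6) by auto
  qed
  moreover have "m c x \<notin> set seen" using Cons.prems(5) by auto
  ultimately show ?case using xin srch_intro by metis
qed

lemma prods_pp:
  "map (\<lambda>i. foldl m c (take i gs)) [1..<length gs + 1] = prods m c gs"
proof (induction gs arbitrary: c)
  case Nil
  then show ?case by simp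
next
  case (Cons x xs)
  have e: "[1..<length (x#xs) + 1] = 1 # map Suc [1..<length xs + 1]"
    by (simp add: upt_conv_Cons map_Suc_upt del: upt_Suc)
  show ?case unfolding e list.map(2) map_map comp_def
    using Cons.IH[of "m c x"]
    by (simp only: One_nat_def take_Suc_Cons foldl_Cons take_0 foldl_Nil prods.simps)
qed

lemma inj_distinct: "inj_on f {1..k} \<longleftrightarrow> distinct (map f [1..<k+1])"
  by (simp add: distinct_map atLeastLessThanSuc_atLeastAtMost del: upt_Suc)

lemma pp_prods: "map (partial_prod G gs) [1..<length gs + 1] = prods (\<otimes>\<^bsub>G\<^esub>) \<one>\<^bsub>G\<^esub> gs"
  unfolding partial_prod_def by (rule prods_pp)

lemma pp_last: "partial_prod G gs (length gs) = foldl (\<otimes>\<^bsub>G\<^esub>) \<one>\<^bsub>G\<^esub> gs"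
  unfolding partial_prod_def by simp

lemma good_srch:
  assumes "S_sequencing K (set L) ks \<or> rotational_S_sequencing K (set L) ks" and "distinct L"
  shows "srch (\<otimes>\<^bsub>K\<^esub>) \<one>\<^bsub>K\<^esub> L \<one>\<^bsub>K\<^esub> []"
proof -
  have d: "distinct ks" "set ks = set L" using assms unfolding S_sequencing_def rotational_S_sequencing_def by auto
  have inj: "inj_on (partial_prod K ks) {1..length ks}"
    using assms unfolding S_sequencing_def rotational_S_sequencing_def
    by (auto intro: inj_on_subset)
  have "foldl (\<otimes>\<^bsub>K\<^esub>) \<one>\<^bsub>K\<^esub> ks = \<one>\<^bsub>K\<^esub> \<or> \<one>\<^bsub>K\<^esub> \<notin> set (prods (\<otimes>\<^bsub>K\<^esub>) \<one>\<^bsub>K\<^esub> ks)"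
  proof (cases "S_sequencing K (set L) ks")
    case True
    have "\<one>\<^bsub>K\<^esub> \<notin> partial_prod K ks ` {1..length ks}"
    proof
      assume "\<one>\<^bsub>K\<^esub> \<in> partial_prod K ks ` {1..length ks}"
      then obtain i where i: "i \<in> {1..length ks}" "partial_prod K ks i = \<one>\<^bsub>K\<^esub>" by auto
      have "partial_prod K ks 0 = \<one>\<^bsub>K\<^esub>" by (simp add: partial_prod_def)
      with i True show False unfolding S_sequencing_def inj_on_def
        by (metis atLeastAtMost_iff le0 not_one_le_zero)
    qed
    moreover have "{1..<length ks + 1} = {1..length ks}" by auto
    ultimately have "\<one>\<^bsub>K\<^esub> \<notin> set (map (partial_prod K ks) [1..<length ks + 1])"
      by (simp del: upt_Suc)
    then show ?thesis unfolding pp_prods by blast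
  next
    case False
    then show ?thesis using assms pp_last[of K ks] unfolding rotational_S_sequencing_def by auto
  qed
  moreover have "distinct (prods (\<otimes>\<^bsub>K\<^esub>) \<one>\<^bsub>K\<^esub> ks)"
    using inj inj_distinct[of "partial_prod K ks" "length ks"] pp_prods[of K ks] by simp
  ultimately show ?thesis
    using d assms(2) by (intro srch_complete[of ks L "(\<otimes>\<^bsub>K\<^esub>)" "\<one>\<^bsub>K\<^esub>" "[]" "\<one>\<^bsub>K\<^esub>"]) auto
qed

primrec tr :: "('a \<Rightarrow> 'a \<Rightarrow> 'a) \<Rightarrow> 'a \<Rightarrow> 'a list \<Rightarrow> 'a list \<Rightarrow> 'a \<Rightarrow> 'a list \<Rightarrow> bool" where
  "tr m e rem [] c seen = False"
| "tr m e rem (x # xs) c seen = (if m c x \<in> set seen then tr m e rem xs c seen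
     else (srch m e (remove1 x rem) (m c x) (m c x # seen) \<or> tr m e rem xs c seen))"

lemma tr_eq: "tr m e rem xs c seen = (\<exists>x\<in>set xs. m c x \<notin> set seen \<and>
      srch m e (remove1 x rem) (m c x) (m c x # seen))"
  by (induction xs) auto

lemma srch_eval: "srch m e [] c seen = (c = e \<or> e \<notin> set seen)"
  "srch m e (y # ys) c seen = tr m e (y # ys) (y # ys) c seen"
  by (simp_all only: srch.simps tr_eq)

lemma D6_bad: "\<not> srch (\<otimes>\<^bsub>D6\<^esub>) \<one>\<^bsub>D6\<^esub> [(0,1),(1,0),(1,1),(2,0),(2,1)] \<one>\<^bsub>D6\<^esub> []"
  by code_simp

lemma Q8_bad: "\<not> srch (\<otimes>\<^bsub>Q8\<^esub>) \<one>\<^bsub>Q8\<^esub> [(0,1),(1,0),(1,1),(2,1),(3,0),(3,1)] \<one>\<^bsub>Q8\<^esub> []"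
  by code_simp

lemma foldl_hom:
  assumes sub: "subgroup H G"
    and hm: "\<forall>x\<in>H. \<forall>y\<in>H. f (x \<otimes>\<^bsub>G\<^esub> y) = f x \<otimes>\<^bsub>K\<^esub> f y"
  shows "set xs \<subseteq> H \<Longrightarrow> c \<in> H \<Longrightarrow> foldl (\<otimes>\<^bsub>G\<^esub>) c xs \<in> H \<and>
     f (foldl (\<otimes>\<^bsub>G\<^esub>) c xs) = foldl (\<otimes>\<^bsub>K\<^esub>) (f c) (map f xs)"
proof (induction xs arbitrary: c)
  case Nil
  then show ?case by simp
next
  case (Cons x xs)
  have "c \<otimes>\<^bsub>G\<^esub> x \<in> H" using Cons.prems sub by (simp add: subgroup.m_closed)
  then have "foldl (\<otimes>\<^bsub>G\<^esub>) (c \<otimes>\<^bsub>G\<^esub> x) xs \<in> H \<and>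
     f (foldl (\<otimes>\<^bsub>G\<^esub>) (c \<otimes>\<^bsub>G\<^esub> x) xs) = foldl (\<otimes>\<^bsub>K\<^esub>) (f (c \<otimes>\<^bsub>G\<^esub> x)) (map f xs)"
    using Cons.prems by (intro Cons.IH) auto
  moreover have "f (c \<otimes>\<^bsub>G\<^esub> x) = f c \<otimes>\<^bsub>K\<^esub> f x" using hm Cons.prems by simp
  ultimately show ?case by simp
qed

lemma transfer:
  fixes G :: "('a, 'b) monoid_scheme" and K :: "('c, 'd) monoid_scheme"
  assumes grp: "group G" and sub: "subgroup H G" and iso: "G\<lparr>carrier := H\<rparr> \<cong> K"
    and bad: "\<not> srch (\<otimes>\<^bsub>K\<^esub>) \<one>\<^bsub>K\<^esub> L \<one>\<^bsub>K\<^esub> []" and dL: "distinct L"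
    and LK: "set L \<subseteq> carrier K" and oneL: "\<one>\<^bsub>K\<^esub> \<notin> set L"
    and idem: "\<forall>x\<in>carrier K. x \<otimes>\<^bsub>K\<^esub> x = x \<longrightarrow> x = \<one>\<^bsub>K\<^esub>"
  shows "\<not> strongly_sequenceable G"
proof
  assume ss: "strongly_sequenceable G"
  obtain f where f: "f \<in> iso (G\<lparr>carrier := H\<rparr>) K" using iso unfolding is_iso_def by blast
  have fH: "\<forall>x\<in>H. f x \<in> carrier K" and hm: "\<forall>x\<in>H. \<forall>y\<in>H. f (x \<otimes>\<^bsub>G\<^esub> y) = f x \<otimes>\<^bsub>K\<^esub> f y"
    and bij: "bij_betw f H (carrier K)"
    using f unfolding iso_def hom_def by auto
  have oneH: "\<one>\<^bsub>G\<^esub> \<in> H" using sub by (rule subgroup.one_closed)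
  have "f \<one>\<^bsub>G\<^esub> = f \<one>\<^bsub>G\<^esub> \<otimes>\<^bsub>K\<^esub> f \<one>\<^bsub>G\<^esub>"
  proof -
    have "\<one>\<^bsub>G\<^esub> \<otimes>\<^bsub>G\<^esub> \<one>\<^bsub>G\<^esub> = \<one>\<^bsub>G\<^esub>"
      using grp by (simp add: group.is_monoid monoid.l_one monoid.one_closed)
    then show ?thesis using hm oneH by metis
  qed
  then have f1: "f \<one>\<^bsub>G\<^esub> = \<one>\<^bsub>K\<^esub>" using idem fH oneH by metis
  define g where "g = inv_into H f"
  have gK: "\<forall>y\<in>carrier K. g y \<in> H \<and> f (g y) = y"
    using bij unfolding g_def bij_betw_def
    by (auto intro: inv_into_into f_inv_into_f)
  define S where "S = g ` set L"
  have SH: "S \<subseteq> H" using gK LK unfolding S_def by auto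
  have S1: "\<one>\<^bsub>G\<^esub> \<notin> S"
  proof
    assume "\<one>\<^bsub>G\<^esub> \<in> S"
    then obtain y where y: "y \<in> set L" "g y = \<one>\<^bsub>G\<^esub>" unfolding S_def by auto
    then have "y = \<one>\<^bsub>K\<^esub>" using gK LK f1 by (metis subsetD)
    then show False using y oneL by simp
  qed
  have HG: "H \<subseteq> carrier G" using sub by (rule subgroup.subset)
  have "S \<subseteq> carrier G - {\<one>\<^bsub>G\<^esub>}" using SH S1 HG by auto
  then obtain gs where gs: "S_sequencing G S gs \<or> rotational_S_sequencing G S gs"
    using ss unfolding strongly_sequenceable_def by blast
  have dgs: "distinct gs" and sgs: "set gs = S"
    using gs unfolding S_sequencing_def rotational_S_sequencing_def by auto
  define ks where "ks = map f gs"
  have injH: "inj_on f H" using bij by (simp add: bij_betw_def)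
  have dks: "distinct ks" unfolding ks_def using dgs sgs SH injH
    by (simp add: distinct_map inj_on_subset)
  have sks: "set ks = set L" unfolding ks_def using sgs gK LK unfolding S_def
    by (force simp: image_image)
  have pp: "partial_prod G gs i \<in> H \<and> partial_prod K ks i = f (partial_prod G gs i)" for i
  proof -
    have "set (take i gs) \<subseteq> H" using sgs SH by (meson set_take_subset subset_trans)
    from foldl_hom[OF sub hm this oneH] show ?thesis
      unfolding partial_prod_def ks_def by (simp add: take_map f1)
  qed
  have injA: "inj_on (partial_prod K ks) A" if "inj_on (partial_prod G gs) A" for A
  proof -
    have "inj_on (f \<circ> partial_prod G gs) A"
      using that pp by (intro comp_inj_on) (auto intro: inj_on_subset[OF injH])
    then show ?thesis using pp by (simp add: inj_on_def)
  qed
  have len: "length ks = length gs" unfolding ks_def by simp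
  have "S_sequencing K (set L) ks \<or> rotational_S_sequencing K (set L) ks"
  proof (cases "S_sequencing G S gs")
    case True
    then show ?thesis using dks sks injA len unfolding S_sequencing_def by auto
  next
    case False
    then have r: "rotational_S_sequencing G S gs" using gs by blast
    then have "partial_prod K ks (length ks) = \<one>\<^bsub>K\<^esub>"
      using pp[of "length gs"] f1 len unfolding rotational_S_sequencing_def by simp
    then show ?thesis using r dks sks injA len unfolding rotational_S_sequencing_def by auto
  qed
  then have "srch (\<otimes>\<^bsub>K\<^esub>) \<one>\<^bsub>K\<^esub> L \<one>\<^bsub>K\<^esub> []" using dL by (rule good_srch)
  then show False using bad by simp
qed

lemma D6_facts: "distinct [(0::int,1::int),(1,0),(1,1),(2,0),(2,1)]"
  "set [(0::int,1::int),(1,0),(1,1),(2,0),(2,1)] \<subseteq> carrier D6"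
  "\<one>\<^bsub>D6\<^esub> \<notin> set [(0::int,1::int),(1,0),(1,1),(2,0),(2,1)]"
  "\<forall>x\<in>carrier D6. x \<otimes>\<^bsub>D6\<^esub> x = x \<longrightarrow> x = \<one>\<^bsub>D6\<^esub>"
  by code_simp+

lemma Q8_facts: "distinct [(0::int,1::int),(1,0),(1,1),(2,1),(3,0),(3,1)]"
  "set [(0::int,1::int),(1,0),(1,1),(2,1),(3,0),(3,1)] \<subseteq> carrier Q8"
  "\<one>\<^bsub>Q8\<^esub> \<notin> set [(0::int,1::int),(1,0),(1,1),(2,1),(3,0),(3,1)]"
  "\<forall>x\<in>carrier Q8. x \<otimes>\<^bsub>Q8\<^esub> x = x \<longrightarrow> x = \<one>\<^bsub>Q8\<^esub>"
  by code_simp+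

theorem theorem6p1:
  fixes G :: "('a, 'b) monoid_scheme"
  assumes "group G" and "finite (carrier G)"
    and "\<exists>H. subgroup H G \<and> (G\<lparr>carrier := H\<rparr> \<cong> D6 \<or> G\<lparr>carrier := H\<rparr> \<cong> Q8)"
  shows "\<not> strongly_sequenceable G"
proof -
  obtain H where H: "subgroup H G" "G\<lparr>carrier := H\<rparr> \<cong> D6 \<or> G\<lparr>carrier := H\<rparr> \<cong> Q8"
    using assms(3) by blast
  show ?thesis
  proof (cases "G\<lparr>carrier := H\<rparr> \<cong> D6")
    case True
    show ?thesis by (rule transfer[OF assms(1) H(1) True D6_bad D6_facts])
  next
    case False
    then have "G\<lparr>carrier := H\<rparr> \<cong> Q8" using H(2) by blast
    then show ?thesis by (rule transfer[OF assms(1) H(1) _ Q8_bad Q8_facts])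
  qed
qed

end
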